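(* For a (finite simple) graph $G$, the following are equivalent: (1) $G$ is threshold; (2) the clique hypergraph ${\cal C}(G)$ is $1$-Sperner; (3) ${\cal C}(G)$ is threshold; (4) ${\cal C}(G)$ is $2$-asummable.
   Context: A hypergraph ${\cal H}=(V,{\cal E})$ consists of a finite vertex set $V$ and a set ${\cal E}$ of subsets of $V$. A set $X\subseteq V$ is dependent if it contains some hyperedge, and independent otherwise. ${\cal H}$ is threshold if there exist $w:V\to\mathbb{Z}_{\ge0}$ and $t\in\mathbb{Z}_{\ge0}$ such that for every $X\subseteq V$, $\sum_{x\in X}w(x)\ge t$ iff $X$ is dependent. A graph is threshold if, viewed as the hypergraph $(V(G),E(G))$ whose hyperedges are its edges, it is threshold. ${\cal H}$ is $1$-Sperner if every two distinct hyperedges $e,f$ satisfy $\min\{|e\setminus f|,|f\setminus e|\}=1$. ${\cal H}$ is $2$-asummable if there are no independent sets $A_1,A_2$ and dependent sets $B_1,B_2$ (not necessarily distinct) with $\chi^{A_1}+\chi^{A_2}=\chi^{B_1}+\chi^{B_2}$, where $\chi^S\in\{0,1\}^V$ is the characteristic vector of $S$. The clique hypergraph ${\cal C}(G)$ has vertex set $V(G)$ and hyperedges the maximal cliques of $G$. *)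

theory Defs
  imports Main
begin

definition hypergraph :: "'a set \<Rightarrow> 'a set set \<Rightarrow> bool" where
  "hypergraph V Es \<longleftrightarrow> finite V \<and> (\<forall>e\<in>Es. e \<subseteq> V)"

definition dependent :: "'a set set \<Rightarrow> 'a set \<Rightarrow> bool" where
  "dependent Es X \<longleftrightarrow> (\<exists>e\<in>Es. e \<subseteq> X)"

definition threshold_hg :: "'a set \<Rightarrow> 'a set set \<Rightarrow> bool" where
  "threshold_hg V Es \<longleftrightarrow> (\<exists>(w::'a \<Rightarrow> nat) (t::nat).
     \<forall>X. X \<subseteq> V \<longrightarrow> ((\<Sum>x\<in>X. w x) \<ge> t \<longleftrightarrow> dependent Es X))"

definition one_sperner :: "'a set set \<Rightarrow> bool" where
  "one_sperner Es \<longleftrightarrow> (\<forall>e\<in>Es. \<forall>f\<in>Es. e \<noteq> f \<longrightarrow> min (card (e - f)) (card (f - e)) = 1)"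

definition chi :: "'a set \<Rightarrow> 'a \<Rightarrow> nat" where
  "chi S x = (if x \<in> S then 1 else 0)"

definition two_asummable :: "'a set \<Rightarrow> 'a set set \<Rightarrow> bool" where
  "two_asummable V Es \<longleftrightarrow> \<not> (\<exists>A1 A2 B1 B2.
     A1 \<subseteq> V \<and> A2 \<subseteq> V \<and> B1 \<subseteq> V \<and> B2 \<subseteq> V \<and>
     \<not> dependent Es A1 \<and> \<not> dependent Es A2 \<and> dependent Es B1 \<and> dependent Es B2 \<and>
     (\<forall>x\<in>V. chi A1 x + chi A2 x = chi B1 x + chi B2 x))"

definition simple_graph :: "'a set \<Rightarrow> 'a set set \<Rightarrow> bool" where
  "simple_graph V E \<longleftrightarrow> finite V \<and> (\<forall>e\<in>E. e \<subseteq> V \<and> card e = 2)"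

definition threshold_graph :: "'a set \<Rightarrow> 'a set set \<Rightarrow> bool" where
  "threshold_graph V E \<longleftrightarrow> threshold_hg V E"

definition clique :: "'a set \<Rightarrow> 'a set set \<Rightarrow> 'a set \<Rightarrow> bool" where
  "clique V E K \<longleftrightarrow> K \<subseteq> V \<and> (\<forall>x\<in>K. \<forall>y\<in>K. x \<noteq> y \<longrightarrow> {x, y} \<in> E)"

definition maximal_clique :: "'a set \<Rightarrow> 'a set set \<Rightarrow> 'a set \<Rightarrow> bool" where
  "maximal_clique V E K \<longleftrightarrow> clique V E K \<and> (\<forall>K'. clique V E K' \<and> K \<subseteq> K' \<longrightarrow> K' = K)"

definition clique_edges :: "'a set \<Rightarrow> 'a set set \<Rightarrow> 'a set set" where
  "clique_edges V E = {K. maximal_clique V E K}"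

end

theory Submission
  imports Defs
begin

definition cfg :: "'a set \<Rightarrow> 'a set set \<Rightarrow> bool" where
  "cfg V E \<longleftrightarrow> (\<exists>a b c d. a \<in> V \<and> b \<in> V \<and> c \<in> V \<and> d \<in> V \<and> a \<noteq> c \<and> b \<noteq> d \<and>
      {a,b} \<in> E \<and> {c,d} \<in> E \<and> {a,c} \<notin> E \<and> {b,d} \<notin> E)"

lemma edge_ne: "simple_graph V E \<Longrightarrow> {x,y} \<in> E \<Longrightarrow> x \<noteq> y"
  unfolding simple_graph_def by fastforce

lemma edge_V: "simple_graph V E \<Longrightarrow> {x,y} \<in> E \<Longrightarrow> x \<in> V \<and> y \<in> V"
  unfolding simple_graph_def by blast

lemma edge_sym: "{x,y} \<in> E \<Longrightarrow> {y,x} \<in> E"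
  by (simp add: insert_commute)

lemma edge_2: "simple_graph V E \<Longrightarrow> e \<in> E \<Longrightarrow> \<exists>x y. e = {x,y} \<and> x \<noteq> y"
  unfolding simple_graph_def by (meson card_2_iff)

lemma max_clique_exists:
  assumes "finite V" "clique V E C"
  shows "\<exists>K. maximal_clique V E K \<and> C \<subseteq> K"
  using assms(2)
proof (induction "card (V - C)" arbitrary: C rule: less_induct)
  case less
  show ?case
  proof (cases "maximal_clique V E C")
    case True then show ?thesis by blast
  next
    case False
    then obtain C' where C': "clique V E C'" "C \<subseteq> C'" "C' \<noteq> C"
      using less.prems unfolding maximal_clique_def by blast
    have "C \<subset> C'" using C' by blast
    moreover have "C' \<subseteq> V" using C'(1) unfolding clique_def by simp
    ultimately have "V - C' \<subset> V - C"
      by (simp add: Diff_mono \<open>C \<subset> C'\<close> psubset_imp_subset) (use \<open>C \<subset> C'\<close> \<open>C' \<subseteq> V\<close> in blast)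
    hence "card (V - C') < card (V - C)"
      using assms(1) by (meson finite_Diff psubset_card_mono)
    then obtain K where "maximal_clique V E K" "C' \<subseteq> K" using less.hyps C' by blast
    then show ?thesis using C' by blast
  qed
qed

lemma sub2_eq: "e \<subseteq> {a,c} \<Longrightarrow> card e = 2 \<Longrightarrow> e = {a,c}"
proof -
  assume "e \<subseteq> {a,c}" "card e = 2"
  moreover have "card {a,c} \<le> 2" by (simp add: card_insert_if)
  ultimately show ?thesis by (intro card_seteq) auto
qed

lemma thr_noncfg:
  assumes G: "simple_graph V E" and T: "threshold_graph V E"
  shows "\<not> cfg V E"
proof
  assume "cfg V E"
  then obtain a b c d where abcd: "a \<in> V" "b \<in> V" "c \<in> V" "d \<in> V" "a \<noteq> c" "b \<noteq> d"
      "{a,b} \<in> E" "{c,d} \<in> E" "{a,c} \<notin> E" "{b,d} \<notin> E" unfolding cfg_def by blast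
  obtain w :: "'a \<Rightarrow> nat" and t :: nat where wt: "\<forall>X. X \<subseteq> V \<longrightarrow> ((\<Sum>x\<in>X. w x) \<ge> t \<longleftrightarrow> dependent E X)"
    using T unfolding threshold_graph_def threshold_hg_def by blast
  have nd: "\<not> dependent E {x,y}" if "{x,y} \<notin> E" for x y
  proof
    assume "dependent E {x,y}"
    then obtain e where "e \<in> E" "e \<subseteq> {x,y}" unfolding dependent_def by blast
    moreover have "card e = 2" using G \<open>e \<in> E\<close> unfolding simple_graph_def by blast
    ultimately show False using sub2_eq that by metis
  qed
  have ab: "w a + w b \<ge> t" using wt[rule_format, of "{a,b}"] abcd edge_ne[OF G, of a b]
    unfolding dependent_def by auto
  have cd: "w c + w d \<ge> t" using wt[rule_format, of "{c,d}"] abcd edge_ne[OF G, of c d]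
    unfolding dependent_def by auto
  have ac: "\<not> w a + w c \<ge> t" using wt[rule_format, of "{a,c}"] abcd nd[of a c] by auto
  have bd: "\<not> w b + w d \<ge> t" using wt[rule_format, of "{b,d}"] abcd nd[of b d] by auto
  show False using ab cd ac bd by linarith
qed

lemma sum_chi: "finite V \<Longrightarrow> A \<subseteq> V \<Longrightarrow> sum w A = (\<Sum>x\<in>V. chi A x * w x)"
proof -
  assume "finite V" "A \<subseteq> V"
  have "(\<Sum>x\<in>V. chi A x * w x) = (\<Sum>x\<in>V. if x \<in> A then w x else 0)"
    by (rule sum.cong) (auto simp: chi_def)
  also have "\<dots> = sum w (V \<inter> A)" using \<open>finite V\<close> by (simp add: sum.inter_restrict)
  also have "V \<inter> A = A" using \<open>A \<subseteq> V\<close> by blast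
  finally show ?thesis by simp
qed

lemma thr_asum:
  assumes "finite V" "threshold_hg V Es"
  shows "two_asummable V Es"
proof -
  obtain w :: "'a \<Rightarrow> nat" and t :: nat where wt: "\<forall>X. X \<subseteq> V \<longrightarrow> ((\<Sum>x\<in>X. w x) \<ge> t \<longleftrightarrow> dependent Es X)"
    using assms(2) unfolding threshold_hg_def by blast
  show ?thesis unfolding two_asummable_def
  proof
    assume "\<exists>A1 A2 B1 B2.
     A1 \<subseteq> V \<and> A2 \<subseteq> V \<and> B1 \<subseteq> V \<and> B2 \<subseteq> V \<and>
     \<not> dependent Es A1 \<and> \<not> dependent Es A2 \<and> dependent Es B1 \<and> dependent Es B2 \<and>
     (\<forall>x\<in>V. chi A1 x + chi A2 x = chi B1 x + chi B2 x)"
    then obtain A1 A2 B1 B2 where H: "A1 \<subseteq> V" "A2 \<subseteq> V" "B1 \<subseteq> V" "B2 \<subseteq> V"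
     "\<not> dependent Es A1" "\<not> dependent Es A2" "dependent Es B1" "dependent Es B2"
     "\<forall>x\<in>V. chi A1 x + chi A2 x = chi B1 x + chi B2 x" by blast
    have "sum w A1 + sum w A2 = (\<Sum>x\<in>V. (chi A1 x + chi A2 x) * w x)"
      using sum_chi[OF assms(1) H(1)] sum_chi[OF assms(1) H(2)] by (simp add: sum.distrib algebra_simps)
    also have "\<dots> = (\<Sum>x\<in>V. (chi B1 x + chi B2 x) * w x)" using H(9) by simp
    also have "\<dots> = sum w B1 + sum w B2"
      using sum_chi[OF assms(1) H(3)] sum_chi[OF assms(1) H(4)] by (simp add: sum.distrib algebra_simps)
    finally have eq: "sum w A1 + sum w A2 = sum w B1 + sum w B2" .
    have "sum w A1 < t" "sum w A2 < t" "sum w B1 \<ge> t" "sum w B2 \<ge> t"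
      using wt H by (meson not_le)+
    then show False using eq by linarith
  qed
qed

lemma edge_clique: "simple_graph V E \<Longrightarrow> {a,b} \<in> E \<Longrightarrow> clique V E {a,b}"
  unfolding clique_def using edge_V[of V E a b] by (auto simp: insert_commute)

lemma maxcl_clique: "maximal_clique V E K \<Longrightarrow> clique V E K"
  unfolding maximal_clique_def by blast

lemma in_clique_adj: "clique V E K \<Longrightarrow> x \<in> K \<Longrightarrow> y \<in> K \<Longrightarrow> x \<noteq> y \<Longrightarrow> {x,y} \<in> E"
  unfolding clique_def by blast

lemma sperner_noncfg:
  assumes G: "simple_graph V E" and S: "one_sperner (clique_edges V E)"
  shows "\<not> cfg V E"
proof
  assume "cfg V E"
  then obtain a b c d where abcd: "a \<in> V" "b \<in> V" "c \<in> V" "d \<in> V" "a \<noteq> c" "b \<noteq> d"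
      "{a,b} \<in> E" "{c,d} \<in> E" "{a,c} \<notin> E" "{b,d} \<notin> E" unfolding cfg_def by blast
  have fin: "finite V" using G simple_graph_def by blast
  obtain e where e: "maximal_clique V E e" "{a,b} \<subseteq> e"
    using max_clique_exists[OF fin edge_clique[OF G abcd(7)]] by blast
  obtain f where f: "maximal_clique V E f" "{c,d} \<subseteq> f"
    using max_clique_exists[OF fin edge_clique[OF G abcd(8)]] by blast
  have "a \<notin> f" using in_clique_adj[OF maxcl_clique[OF f(1)], of a c] f abcd by blast
  moreover have "b \<notin> f" using in_clique_adj[OF maxcl_clique[OF f(1)], of b d] f abcd by blast
  moreover have "c \<notin> e" using in_clique_adj[OF maxcl_clique[OF e(1)], of a c] e abcd by blast
  moreover have "d \<notin> e" using in_clique_adj[OF maxcl_clique[OF e(1)], of b d] e abcd by blast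
  ultimately have s1: "{a,b} \<subseteq> e - f" and s2: "{c,d} \<subseteq> f - e" and ne: "e \<noteq> f" using e f by auto
  have fe: "finite e" "finite f" using e(1) f(1) fin unfolding maximal_clique_def clique_def
    by (meson finite_subset)+
  have "card {a,b} \<le> card (e - f)" using s1 fe by (simp add: card_mono)
  hence c1: "card (e - f) \<ge> 2" using edge_ne[OF G abcd(7)] by simp
  have "card {c,d} \<le> card (f - e)" using s2 fe by (simp add: card_mono)
  hence c2: "card (f - e) \<ge> 2" using edge_ne[OF G abcd(8)] by simp
  have ee: "e \<in> clique_edges V E" "f \<in> clique_edges V E" using e(1) f(1) by (simp_all add: clique_edges_def)
  have "min (card (e - f)) (card (f - e)) = 1"
    using S[unfolded one_sperner_def, rule_format, OF ee ne] .
  then show False using c1 c2 by (simp add: min_def split: if_splits)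
qed

lemma maxcl_sub: "maximal_clique V E K \<Longrightarrow> clique V E L \<Longrightarrow> K \<subseteq> L \<Longrightarrow> L = K"
  unfolding maximal_clique_def by blast

lemma clique_subset: "clique V E K \<Longrightarrow> L \<subseteq> K \<Longrightarrow> clique V E L"
  unfolding clique_def by blast

lemma clique_insert: "clique V E K \<Longrightarrow> x \<in> V \<Longrightarrow> (\<forall>z\<in>K. z \<noteq> x \<longrightarrow> {x,z} \<in> E) \<Longrightarrow> clique V E (insert x K)"
  unfolding clique_def by (auto simp: insert_commute)

lemma maxcl_nonadj:
  assumes "maximal_clique V E e" "x \<in> V" "x \<notin> e"
  shows "\<exists>z\<in>e. z \<noteq> x \<and> {x,z} \<notin> E"
proof (rule ccontr)
  assume "\<not> ?thesis"
  hence "clique V E (insert x e)" using clique_insert[OF maxcl_clique[OF assms(1)] assms(2)] by blast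
  hence "insert x e = e" using maxcl_sub[OF assms(1)] by blast
  thus False using assms(3) by blast
qed

lemma maxcl_diff:
  assumes "maximal_clique V E e" "maximal_clique V E f" "e \<noteq> f"
  shows "e - f \<noteq> {}"
  using maxcl_sub[OF assms(1) maxcl_clique[OF assms(2)]] assms(3) by blast

lemma maxcl_V: "maximal_clique V E e \<Longrightarrow> e \<subseteq> V"
  unfolding maximal_clique_def clique_def by blast

lemma card_ge2_other: "finite A \<Longrightarrow> card A \<ge> 2 \<Longrightarrow> a \<in> A \<Longrightarrow> \<exists>b\<in>A. b \<noteq> a"
  by (metis card_le_Suc0_iff_eq not_less_eq_eq numeral_2_eq_2)

lemma noncfg_sperner:
  assumes G: "simple_graph V E" and N: "\<not> cfg V E"
  shows "one_sperner (clique_edges V E)"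
  unfolding one_sperner_def
proof (intro ballI impI)
  fix e f assume "e \<in> clique_edges V E" "f \<in> clique_edges V E" "e \<noteq> f"
  hence e: "maximal_clique V E e" and f: "maximal_clique V E f" and ne: "e \<noteq> f"
    by (auto simp: clique_edges_def)
  have fin: "finite V" using G simple_graph_def by blast
  have eV: "e \<subseteq> V" and fV: "f \<subseteq> V" using maxcl_V e f by auto
  have fe: "finite (e - f)" "finite (f - e)" using fin eV fV finite_subset by blast+
  have n1: "e - f \<noteq> {}" using maxcl_diff[OF e f ne] .
  have n2: "f - e \<noteq> {}" using maxcl_diff[OF f e] ne by blast
  have c1: "card (e - f) \<ge> 1" "card (f - e) \<ge> 1" using n1 n2 fe
    by (simp_all add: Suc_le_eq card_gt_0_iff)
  show "min (card (e - f)) (card (f - e)) = 1"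
  proof (rule ccontr)
    assume "min (card (e - f)) (card (f - e)) \<noteq> 1"
    hence c2: "card (e - f) \<ge> 2" "card (f - e) \<ge> 2" using c1 by (auto simp: min_def split: if_splits)
    have cf: "\<And>p q r s. p \<in> V \<Longrightarrow> q \<in> V \<Longrightarrow> r \<in> V \<Longrightarrow> s \<in> V \<Longrightarrow> p \<noteq> r \<Longrightarrow> q \<noteq> s \<Longrightarrow>
      {p,q} \<in> E \<Longrightarrow> {r,s} \<in> E \<Longrightarrow> {p,r} \<notin> E \<Longrightarrow> {q,s} \<notin> E \<Longrightarrow> False"
      using N unfolding cfg_def by blast
    obtain a where a: "a \<in> e - f" using n1 by blast
    obtain b where b: "b \<in> f" "b \<noteq> a" "{a,b} \<notin> E" using maxcl_nonadj[OF f, of a] a eV by blast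
    have bnot: "b \<notin> e" using in_clique_adj[OF maxcl_clique[OF e], of a b] a b by blast
    have key: "{a',b'} \<in> E" if "a' \<in> e - f" "b' \<in> f - e" "a' \<noteq> a" "b' \<noteq> b" for a' b'
    proof (rule ccontr)
      assume "{a',b'} \<notin> E"
      show False
      proof (rule cf[of a a' b b'])
        show "{a, a'} \<in> E" using in_clique_adj[OF maxcl_clique[OF e], of a a'] a that by blast
        show "{b, b'} \<in> E" using in_clique_adj[OF maxcl_clique[OF f], of b b'] b that by blast
      qed (use a b bnot that eV fV \<open>{a',b'} \<notin> E\<close> in auto)
    qed
    obtain a' where a': "a' \<in> e - f" "a' \<noteq> a" using card_ge2_other[OF fe(1) c2(1) a] by blast
    obtain b' where b': "b' \<in> f - e" "b' \<noteq> b" using card_ge2_other[OF fe(2) c2(2), of b] b bnot by blast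
    have "{a',b} \<notin> E"
    proof -
      obtain z where z: "z \<in> f" "z \<noteq> a'" "{a',z} \<notin> E" using maxcl_nonadj[OF f, of a'] a' eV by blast
      have "z \<notin> e" using in_clique_adj[OF maxcl_clique[OF e], of a' z] a' z by blast
      hence "z = b" using key[of a' z] a' z by blast
      thus ?thesis using z by simp
    qed
    moreover have "{a,b'} \<notin> E"
    proof -
      obtain z where z: "z \<in> e" "z \<noteq> b'" "{b',z} \<notin> E" using maxcl_nonadj[OF e, of b'] b' fV by blast
      have "z \<notin> f" using in_clique_adj[OF maxcl_clique[OF f], of b' z] b' z by blast
      hence "z = a" using key[of z b'] b' z edge_sym[of z b' E] by blast
      thus ?thesis using z edge_sym[of a b' E] by blast
    qed
    moreover have "{a', a} \<in> E" using in_clique_adj[OF maxcl_clique[OF e], of a' a] a a' by blast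
    moreover have "{b, b'} \<in> E" using in_clique_adj[OF maxcl_clique[OF f], of b b'] b b' by blast
    ultimately show False using cf[of a' a b b'] a a' b b' bnot eV fV by blast
  qed
qed

lemma swap_indep:
  assumes e: "maximal_clique V E e" and f: "maximal_clique V E f"
    and x: "x \<in> e" "x \<notin> f" and y: "y \<in> f" "y \<notin> e"
    and c: "{x,y} \<in> E \<or> ((\<forall>z\<in>e - f. {z,y} \<notin> E) \<and> \<not> f - e \<subseteq> {y})"
  shows "\<not> dependent (clique_edges V E) (insert y (e - {x}))"
proof
  assume "dependent (clique_edges V E) (insert y (e - {x}))"
  then obtain K where K: "maximal_clique V E K" "K \<subseteq> insert y (e - {x})"
    unfolding dependent_def clique_edges_def by blast
  show False
  proof (cases "y \<in> K")
    case False
    hence "K \<subseteq> e" using K by blast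
    hence "e = K" by (rule maxcl_sub[OF K(1) maxcl_clique[OF e]])
    thus False using K(2) x y by auto
  next
    case True
    show False
    proof (cases "{x,y} \<in> E")
      case True
      have xV: "x \<in> V" using maxcl_V[OF e] x by blast
      have "\<forall>z\<in>K. z \<noteq> x \<longrightarrow> {x,z} \<in> E"
      proof (intro ballI impI)
        fix z assume "z \<in> K" "z \<noteq> x"
        show "{x,z} \<in> E"
        proof (cases "z = y")
          case True thus ?thesis using \<open>{x,y} \<in> E\<close> by simp
        next
          case False
          hence "z \<in> e" using K \<open>z \<in> K\<close> by blast
          thus ?thesis using in_clique_adj[OF maxcl_clique[OF e], of x z] x \<open>z \<noteq> x\<close> by blast
        qed
      qed
      hence "insert x K = K"
        using maxcl_sub[OF K(1) clique_insert[OF maxcl_clique[OF K(1)] xV]] by (meson subset_insertI)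
      thus False using K(2) x y by auto
    next
      case False
      hence c2: "\<forall>z\<in>e - f. {z,y} \<notin> E" "\<not> f - e \<subseteq> {y}" using c by auto
      have "K \<subseteq> f"
      proof
        fix z assume z: "z \<in> K"
        show "z \<in> f"
        proof (cases "z = y")
          case True thus ?thesis using y by simp
        next
          case False
          hence "z \<in> e" "{z,y} \<in> E" using K z in_clique_adj[OF maxcl_clique[OF K(1)], of z y] \<open>y \<in> K\<close> by blast+
          thus ?thesis using c2 by blast
        qed
      qed
      hence "f = K" by (rule maxcl_sub[OF K(1) maxcl_clique[OF f]])
      thus False using K(2) x y c2 by auto
    qed
  qed
qed

lemma asum_sperner:
  assumes G: "simple_graph V E" and A: "two_asummable V (clique_edges V E)"
  shows "one_sperner (clique_edges V E)"
  unfolding one_sperner_def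
proof (intro ballI impI)
  fix e f assume "e \<in> clique_edges V E" "f \<in> clique_edges V E" "e \<noteq> f"
  hence e: "maximal_clique V E e" and f: "maximal_clique V E f" and ne: "e \<noteq> f"
    by (auto simp: clique_edges_def)
  have fin: "finite V" using G simple_graph_def by blast
  have eV: "e \<subseteq> V" and fV: "f \<subseteq> V" using maxcl_V e f by auto
  have fe: "finite (e - f)" "finite (f - e)" using fin eV fV finite_subset by blast+
  have n1: "e - f \<noteq> {}" using maxcl_diff[OF e f ne] .
  have n2: "f - e \<noteq> {}" using maxcl_diff[OF f e] ne by blast
  have c1: "card (e - f) \<ge> 1" "card (f - e) \<ge> 1" using n1 n2 fe
    by (simp_all add: Suc_le_eq card_gt_0_iff)
  show "min (card (e - f)) (card (f - e)) = 1"
  proof (rule ccontr)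
    assume "min (card (e - f)) (card (f - e)) \<noteq> 1"
    hence c2: "card (e - f) \<ge> 2" "card (f - e) \<ge> 2" using c1 by (auto simp: min_def split: if_splits)
    obtain x y where xy: "x \<in> e" "x \<notin> f" "y \<in> f" "y \<notin> e"
      "{x,y} \<in> E \<or> (\<forall>z\<in>e - f. \<forall>u\<in>f - e. {z,u} \<notin> E)"
    proof (cases "\<exists>x\<in>e-f. \<exists>y\<in>f-e. {x,y} \<in> E")
      case True then show ?thesis using that by blast
    next
      case False
      obtain x y where "x \<in> e - f" "y \<in> f - e" using n1 n2 by blast
      then show ?thesis using that False by blast
    qed
    have nf: "\<not> f - e \<subseteq> {y}"
      using card_ge2_other[OF fe(2) c2(2), of y] xy by blast
    have ne': "\<not> e - f \<subseteq> {x}"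
      using card_ge2_other[OF fe(1) c2(1), of x] xy by blast
    have I1: "\<not> dependent (clique_edges V E) (insert y (e - {x}))"
      by (rule swap_indep[OF e f xy(1-4)]) (use xy nf in auto)
    have I2: "\<not> dependent (clique_edges V E) (insert x (f - {y}))"
      by (rule swap_indep[OF f e xy(3,4,1,2)]) (use xy ne' in \<open>auto simp: insert_commute dest: edge_sym\<close>)
    have D1: "dependent (clique_edges V E) e" and D2: "dependent (clique_edges V E) f"
      using e f unfolding dependent_def clique_edges_def by auto
    have "\<forall>z\<in>V. chi (insert y (e - {x})) z + chi (insert x (f - {y})) z = chi e z + chi f z"
      using xy(1-4) by (auto simp: chi_def)
    moreover have "insert y (e - {x}) \<subseteq> V" "insert x (f - {y}) \<subseteq> V" using eV fV xy by auto
    ultimately show False using A I1 I2 D1 D2 eV fV unfolding two_asummable_def by blast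
  qed
qed

lemma iso_dom:
  assumes G: "simple_graph V E" and N: "\<not> cfg V E" and U: "U \<subseteq> V" "U \<noteq> {}"
  shows "\<exists>v\<in>U. (\<forall>y\<in>U. {v,y} \<notin> E) \<or> (\<forall>y\<in>U. y \<noteq> v \<longrightarrow> {v,y} \<in> E)"
proof -
  have fin: "finite U" using G U unfolding simple_graph_def using finite_subset by blast
  define Nb where "Nb = (\<lambda>z. {y\<in>U. {z,y} \<in> E})"
  have finN: "finite (Nb z)" for z using fin unfolding Nb_def by simp
  have cf: "\<And>p q r s. p \<in> V \<Longrightarrow> q \<in> V \<Longrightarrow> r \<in> V \<Longrightarrow> s \<in> V \<Longrightarrow> p \<noteq> r \<Longrightarrow> q \<noteq> s \<Longrightarrow>
      {p,q} \<in> E \<Longrightarrow> {r,s} \<in> E \<Longrightarrow> {p,r} \<notin> E \<Longrightarrow> {q,s} \<notin> E \<Longrightarrow> False"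
    using N unfolding cfg_def by blast
  have "finite ((\<lambda>z. card (Nb z)) ` U)" using fin by simp
  moreover have "(\<lambda>z. card (Nb z)) ` U \<noteq> {}" using U by simp
  ultimately have "Max ((\<lambda>z. card (Nb z)) ` U) \<in> (\<lambda>z. card (Nb z)) ` U" by (rule Max_in)
  then obtain v where v: "v \<in> U" "card (Nb v) = Max ((\<lambda>z. card (Nb z)) ` U)" by auto
  have vmax: "card (Nb z) \<le> card (Nb v)" if "z \<in> U" for z
    using v(2) fin that by simp
  show ?thesis
  proof (cases "\<forall>y\<in>U. y \<noteq> v \<longrightarrow> {v,y} \<in> E")
    case True then show ?thesis using v by blast
  next
    case False
    then obtain u where u: "u \<in> U" "u \<noteq> v" "{v,u} \<notin> E" by blast
    have "\<forall>x\<in>U. {u,x} \<notin> E"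
    proof (intro ballI notI)
      fix x assume x: "x \<in> U" "{u,x} \<in> E"
      have xu: "x \<noteq> u" using edge_ne[OF G x(2)] by simp
      have xv: "x \<noteq> v" using x u by (auto simp: insert_commute)
      have uN: "u \<notin> Nb v" using u unfolding Nb_def by simp
      have vN: "v \<notin> Nb v" using edge_ne[OF G, of v v] unfolding Nb_def by auto
      have cl: "{x,y} \<in> E" if "y \<in> Nb v" "y \<noteq> x" for y
      proof (rule ccontr)
        assume "{x,y} \<notin> E"
        have "y \<in> U" "{v,y} \<in> E" using that unfolding Nb_def by auto
        have "u \<noteq> y" using that uN by auto
        show False
          by (rule cf[of u x v y]) (use U x u \<open>y \<in> U\<close> \<open>{v,y} \<in> E\<close> \<open>{x,y} \<notin> E\<close> that(2) v(1) in \<open>auto simp: insert_commute\<close>)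
      qed
      show False
      proof (cases "{v,x} \<in> E")
        case True
        have xN: "x \<in> Nb v" using True x unfolding Nb_def by simp
        have sub: "insert u (insert v (Nb v - {x})) \<subseteq> Nb x"
          using cl x u v True xN unfolding Nb_def by (auto simp: insert_commute)
        have "card (insert u (insert v (Nb v - {x}))) = card (Nb v) + 1"
          using uN vN xN u finN[of v] by (simp add: card_Diff_singleton card_gt_0_iff) (metis card_Diff1_less card_gt_0_iff emptyE Suc_pred)
        moreover have "card (insert u (insert v (Nb v - {x}))) \<le> card (Nb x)"
          using sub finN[of x] card_mono by blast
        ultimately show False using vmax[OF x(1)] by linarith
      next
        case False
        have sub: "insert u (Nb v) \<subseteq> Nb x"
        proof
          fix y assume "y \<in> insert u (Nb v)"
          then show "y \<in> Nb x"
          proof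
            assume "y = u" thus ?thesis using x u unfolding Nb_def by (simp add: insert_commute)
          next
            assume yN: "y \<in> Nb v"
            hence "y \<noteq> x" using False unfolding Nb_def by auto
            thus ?thesis using cl[OF yN] yN unfolding Nb_def by auto
          qed
        qed
        have "card (insert u (Nb v)) = card (Nb v) + 1" using uN finN[of v] by simp
        moreover have "card (insert u (Nb v)) \<le> card (Nb x)"
          using sub finN[of x] card_mono by blast
        ultimately show False using vmax[OF x(1)] by linarith
      qed
    qed
    then show ?thesis using u by blast
  qed
qed

lemma sum_split_v: "finite X \<Longrightarrow> sum (w::_\<Rightarrow>nat) X = sum w (X - {v}) + (if v \<in> X then w v else 0)"
  by (simp add: sum.remove add.commute)

lemma arith1:
  fixes M t s c :: nat
  assumes "c < M"
  shows "M*t \<le> M*s + c \<longleftrightarrow> t \<le> s"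
proof
  assume h: "M*t \<le> M*s + c"
  show "t \<le> s"
  proof (rule ccontr)
    assume "\<not> t \<le> s"
    hence "s + 1 \<le> t" by simp
    hence "M*(s+1) \<le> M*t" by (rule mult_le_mono2)
    moreover have "M*(s+1) = M*s + M" by simp
    ultimately show False using h assms by linarith
  qed
next
  assume "t \<le> s"
  hence "M*t \<le> M*s" by (rule mult_le_mono2)
  thus "M*t \<le> M*s + c" by linarith
qed

lemma dep_empty: "simple_graph V E \<Longrightarrow> \<not> dependent E {}"
  unfolding dependent_def simple_graph_def by auto

lemma noncfg_thr_graph_U:
  assumes G: "simple_graph V E" and N: "\<not> cfg V E"
  shows "U \<subseteq> V \<Longrightarrow> \<exists>(w::'a\<Rightarrow>nat) (t::nat). \<forall>X. X \<subseteq> U \<longrightarrow> (t \<le> sum w X \<longleftrightarrow> dependent E X)"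
proof -
  have fin: "finite V" using G simple_graph_def by blast
  assume "U \<subseteq> V"
  hence "finite U" using fin finite_subset by blast
  then show ?thesis using \<open>U \<subseteq> V\<close>
  proof (induction U rule: finite_psubset_induct)
    case (psubset U)
    show ?case
    proof (cases "U = {}")
      case True
      show ?thesis
        by (rule exI[of _ "\<lambda>_. 0"], rule exI[of _ 1]) (use True dep_empty[OF G] in auto)
    next
      case False
      obtain v where v: "v \<in> U" "(\<forall>y\<in>U. {v,y} \<notin> E) \<or> (\<forall>y\<in>U. y \<noteq> v \<longrightarrow> {v,y} \<in> E)"
        using iso_dom[OF G N psubset.prems False] by blast
      define U' where "U' = U - {v}"
      have "U' \<subset> U" unfolding U'_def using v(1) by blast
      have "U' \<subseteq> V" unfolding U'_def using psubset.prems by blast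
      obtain w :: "'a \<Rightarrow> nat" and t :: nat where wt: "\<forall>X. X \<subseteq> U' \<longrightarrow> (t \<le> sum w X \<longleftrightarrow> dependent E X)"
        using psubset.IH[OF \<open>U' \<subset> U\<close> \<open>U' \<subseteq> V\<close>] by blast
      have t1: "t \<ge> 1" using wt[rule_format, of "{}"] dep_empty[OF G] by auto
      have finU': "finite U'" using psubset.hyps U'_def by simp
      have edge_v: "\<exists>y. e = {v,y} \<and> y \<noteq> v" if "e \<in> E" "v \<in> e" for e
        using edge_2[OF G that(1)] that(2) by (auto simp: insert_commute)
      from v(2) show ?thesis
      proof
        assume iso: "\<forall>y\<in>U. {v,y} \<notin> E"
        show ?thesis
        proof (rule exI[of _ "w(v := 0)"], rule exI[of _ t], intro allI impI)
          fix X assume X: "X \<subseteq> U"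
          have finX: "finite X" using X psubset.hyps finite_subset by blast
          have "sum (w(v:=0)) X = sum (w(v:=0)) (X - {v})"
            using sum_split_v[OF finX, of "w(v:=0)" v] by simp
          also have "\<dots> = sum w (X - {v})" by (rule sum.cong) auto
          finally have s: "sum (w(v:=0)) X = sum w (X - {v})" .
          have "dependent E X \<longleftrightarrow> dependent E (X - {v})"
          proof
            assume "dependent E X"
            then obtain e where e: "e \<in> E" "e \<subseteq> X" unfolding dependent_def by blast
            have "v \<notin> e"
            proof
              assume "v \<in> e"
              then obtain y where "e = {v,y}" "y \<noteq> v" using edge_v e by blast
              thus False using iso e X by auto
            qed
            thus "dependent E (X - {v})" using e unfolding dependent_def by blast
          next
            assume "dependent E (X - {v})" thus "dependent E X" unfolding dependent_def by blast
          qed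
          moreover have "X - {v} \<subseteq> U'" unfolding U'_def using X by blast
          ultimately show "t \<le> sum (w(v:=0)) X \<longleftrightarrow> dependent E X" using wt s by simp
        qed
      next
        assume dom: "\<forall>y\<in>U. y \<noteq> v \<longrightarrow> {v,y} \<in> E"
        define M where "M = card U' + 1"
        define w' where "w' = (\<lambda>x. M * w x + 1)(v := M*t - 1)"
        show ?thesis
        proof (rule exI[of _ w'], rule exI[of _ "M*t"], intro allI impI)
          fix X assume X: "X \<subseteq> U"
          have finX: "finite X" using X psubset.hyps finite_subset by blast
          define X' where "X' = X - {v}"
          have X'U: "X' \<subseteq> U'" unfolding U'_def X'_def using X by blast
          have finX': "finite X'" using finX X'_def by simp
          have cX: "card X' < M" using card_mono[OF finU' X'U] M_def by simp
          have "sum w' X' = sum (\<lambda>x. M * w x + 1) X'" by (rule sum.cong) (auto simp: w'_def X'_def)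
          also have "\<dots> = sum (\<lambda>x. M * w x) X' + sum (\<lambda>x. 1) X'" by (rule sum.distrib)
          also have "\<dots> = M * sum w X' + card X'" by (simp add: sum_distrib_left)
          finally have sX': "sum w' X' = M * sum w X' + card X'" .
          have s: "sum w' X = M * sum w X' + card X' + (if v \<in> X then M*t - 1 else 0)"
            using sum_split_v[OF finX, of w' v] sX' X'_def w'_def by simp
          have IH: "t \<le> sum w X' \<longleftrightarrow> dependent E X'" using wt X'U by blast
          have Mt: "M * t \<ge> 1" using t1 M_def by simp
          show "M*t \<le> sum w' X \<longleftrightarrow> dependent E X"
          proof (cases "v \<in> X")
            case False
            hence "X' = X" using X'_def by simp
            thus ?thesis using s False arith1[OF cX, of t "sum w X'"] IH by simp
          next
            case True
            have "dependent E X \<longleftrightarrow> X' \<noteq> {}"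
            proof
              assume "dependent E X"
              then obtain e where e: "e \<in> E" "e \<subseteq> X" unfolding dependent_def by blast
              obtain p q where "e = {p,q}" "p \<noteq> q" using edge_2[OF G e(1)] by blast
              thus "X' \<noteq> {}" using e X'_def by auto
            next
              assume "X' \<noteq> {}"
              then obtain y where y: "y \<in> X'" by blast
              hence "{v,y} \<in> E" using dom X X'_def by auto
              moreover have "{v,y} \<subseteq> X" using y True X'_def by auto
              ultimately show "dependent E X" unfolding dependent_def by blast
            qed
            moreover have "X' \<noteq> {} \<longleftrightarrow> card X' \<ge> 1" using finX' by (simp add: Suc_le_eq card_gt_0_iff)
            moreover have "M*t \<le> M * sum w X' + card X' + (M*t - 1) \<longleftrightarrow> 1 \<le> M * sum w X' + card X'"
              using Mt by linarith
            moreover have "1 \<le> M * sum w X' + card X' \<longleftrightarrow> card X' \<ge> 1"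
            proof
              assume h: "1 \<le> M * sum w X' + card X'"
              show "card X' \<ge> 1"
              proof (rule ccontr)
                assume "\<not> card X' \<ge> 1"
                hence "card X' = 0" by simp
                hence "X' = {}" using finX' by simp
                thus False using h by simp
              qed
            qed simp
            ultimately show ?thesis using s True by simp
          qed
        qed
      qed
    qed
  qed
qed

lemma clique_single: "v \<in> U \<Longrightarrow> clique U E {v}"
  unfolding clique_def by simp

lemma maxcl_nonempty: "maximal_clique U E K \<Longrightarrow> v \<in> U \<Longrightarrow> K \<noteq> {}"
  using maxcl_sub[of U E K "{v}"] clique_single[of v U E] by blast

lemma dom_maxcl1:
  assumes v: "v \<in> U" and dom: "\<forall>y\<in>U. y \<noteq> v \<longrightarrow> {v,y} \<in> E" and K: "maximal_clique U E K"
  shows "v \<in> K \<and> maximal_clique (U - {v}) E (K - {v})"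
proof -
  have cK: "clique U E K" using K maxcl_clique by blast
  have "clique U E (insert v K)"
    by (rule clique_insert[OF cK v]) (use dom cK in \<open>auto simp: clique_def\<close>)
  hence vK: "v \<in> K" using maxcl_sub[OF K] by blast
  have c': "clique (U - {v}) E (K - {v})" using cK unfolding clique_def by blast
  have "L = K - {v}" if L: "clique (U - {v}) E L" "K - {v} \<subseteq> L" for L
  proof -
    have "clique U E (insert v L)"
      by (rule clique_insert) (use L v dom in \<open>auto simp: clique_def\<close>)
    moreover have "K \<subseteq> insert v L" using L by blast
    ultimately have "insert v L = K" using maxcl_sub[OF K] by blast
    moreover have "v \<notin> L" using L unfolding clique_def by blast
    ultimately show ?thesis by blast
  qed
  thus ?thesis using vK c' unfolding maximal_clique_def by blast
qed

lemma dom_maxcl2: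
  assumes v: "v \<in> U" and dom: "\<forall>y\<in>U. y \<noteq> v \<longrightarrow> {v,y} \<in> E" and K: "maximal_clique (U - {v}) E K"
  shows "maximal_clique U E (insert v K)"
proof -
  have cK: "clique (U - {v}) E K" using K maxcl_clique by blast
  have c: "clique U E (insert v K)"
    by (rule clique_insert) (use cK v dom in \<open>auto simp: clique_def\<close>)
  have "L = insert v K" if L: "clique U E L" "insert v K \<subseteq> L" for L
  proof -
    have "clique (U - {v}) E (L - {v})" using L unfolding clique_def by blast
    moreover have "K \<subseteq> L - {v}" using L cK unfolding clique_def by blast
    ultimately have "L - {v} = K" using maxcl_sub[OF K] by blast
    thus ?thesis using L by blast
  qed
  thus ?thesis using c unfolding maximal_clique_def by blast
qed

lemma iso_maxcl1:
  assumes K: "maximal_clique U E K" and vK: "v \<notin> K"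
  shows "maximal_clique (U - {v}) E K"
proof -
  have cK: "clique U E K" using K maxcl_clique by blast
  have "clique (U - {v}) E K" using cK vK unfolding clique_def by blast
  moreover have "L = K" if "clique (U - {v}) E L" "K \<subseteq> L" for L
    using maxcl_sub[OF K, of L] that unfolding clique_def by blast
  ultimately show ?thesis unfolding maximal_clique_def by blast
qed

lemma iso_maxcl2:
  assumes v: "v \<in> U" and iso: "\<forall>y\<in>U. {v,y} \<notin> E"
  shows "maximal_clique U E {v}"
proof -
  have "L = {v}" if L: "clique U E L" "{v} \<subseteq> L" for L
  proof -
    have "z = v" if "z \<in> L" for z
    proof (rule ccontr)
      assume "z \<noteq> v"
      hence "{v,z} \<in> E" "z \<in> U" using L that unfolding clique_def by auto
      thus False using iso by blast
    qed
    thus ?thesis using L by blast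
  qed
  thus ?thesis using clique_single[OF v] unfolding maximal_clique_def by blast
qed

lemma iso_maxcl3:
  assumes v: "v \<in> U" and iso: "\<forall>y\<in>U. {v,y} \<notin> E" and ne: "U - {v} \<noteq> {}"
    and K: "maximal_clique (U - {v}) E K"
  shows "maximal_clique U E K"
proof -
  have cK: "clique (U - {v}) E K" using K maxcl_clique by blast
  obtain u where "u \<in> U - {v}" using ne by blast
  hence Kne: "K \<noteq> {}" using maxcl_nonempty[OF K] by blast
  have "L = K" if L: "clique U E L" "K \<subseteq> L" for L
  proof -
    have "v \<notin> L"
    proof
      assume "v \<in> L"
      obtain z where "z \<in> K" using Kne by blast
      hence "z \<in> L" "z \<noteq> v" "z \<in> U" using L cK unfolding clique_def by auto
      hence "{v,z} \<in> E" using in_clique_adj[OF L(1) \<open>v \<in> L\<close>, of z] by blast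
      thus False using iso \<open>z \<in> U\<close> by blast
    qed
    hence "clique (U - {v}) E L" using L unfolding clique_def by blast
    thus ?thesis using maxcl_sub[OF K] L by blast
  qed
  moreover have "clique U E K" using cK unfolding clique_def by blast
  ultimately show ?thesis unfolding maximal_clique_def by blast
qed

lemma noncfg_thr_clique_U:
  assumes G: "simple_graph V E" and N: "\<not> cfg V E"
  shows "U \<subseteq> V \<Longrightarrow> \<exists>(w::'a\<Rightarrow>nat) (t::nat). \<forall>X. X \<subseteq> U \<longrightarrow>
           (t \<le> sum w X \<longleftrightarrow> (\<exists>K. maximal_clique U E K \<and> K \<subseteq> X))"
proof -
  have fin: "finite V" using G simple_graph_def by blast
  assume "U \<subseteq> V"
  hence "finite U" using fin finite_subset by blast
  then show ?thesis using \<open>U \<subseteq> V\<close>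
  proof (induction U rule: finite_psubset_induct)
    case (psubset U)
    show ?case
    proof (cases "U = {}")
      case True
      have "maximal_clique U E {}" using True unfolding maximal_clique_def clique_def by blast
      then show ?thesis
        by (intro exI[of _ "\<lambda>_. 0"] exI[of _ 0]) blast
    next
      case False
      obtain v where v: "v \<in> U" "(\<forall>y\<in>U. {v,y} \<notin> E) \<or> (\<forall>y\<in>U. y \<noteq> v \<longrightarrow> {v,y} \<in> E)"
        using iso_dom[OF G N psubset.prems False] by blast
      define U' where "U' = U - {v}"
      have "U' \<subset> U" unfolding U'_def using v(1) by blast
      have "U' \<subseteq> V" unfolding U'_def using psubset.prems by blast
      obtain w :: "'a \<Rightarrow> nat" and t :: nat where wt: "\<forall>X. X \<subseteq> U' \<longrightarrow>
           (t \<le> sum w X \<longleftrightarrow> (\<exists>K. maximal_clique U' E K \<and> K \<subseteq> X))"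
        using psubset.IH[OF \<open>U' \<subset> U\<close> \<open>U' \<subseteq> V\<close>] by blast
      have finU': "finite U'" using psubset.hyps U'_def by simp
      from v(2) show ?thesis
      proof
        assume iso: "\<forall>y\<in>U. {v,y} \<notin> E"
        show ?thesis
        proof (cases "U' = {}")
          case True
          hence Uv: "U = {v}" using v(1) U'_def by blast
          show ?thesis
          proof (rule exI[of _ "\<lambda>_. 1"], rule exI[of _ 1], intro allI impI)
            fix X assume X: "X \<subseteq> U"
            have "(\<exists>K. maximal_clique U E K \<and> K \<subseteq> X) \<longleftrightarrow> v \<in> X"
            proof
              assume "\<exists>K. maximal_clique U E K \<and> K \<subseteq> X"
              then obtain K where K: "maximal_clique U E K" "K \<subseteq> X" by blast
              have "K \<noteq> {}" using maxcl_nonempty[OF K(1) v(1)] .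
              moreover have "K \<subseteq> U" using K(1) maxcl_V by blast
              ultimately show "v \<in> X" using K(2) Uv by blast
            next
              assume "v \<in> X"
              thus "\<exists>K. maximal_clique U E K \<and> K \<subseteq> X" using iso_maxcl2[OF v(1) iso] by blast
            qed
            moreover have "1 \<le> sum (\<lambda>_. 1::nat) X \<longleftrightarrow> v \<in> X"
              using X Uv by (cases "v \<in> X") (auto simp: subset_singleton_iff)
            ultimately show "1 \<le> sum (\<lambda>_. 1::nat) X \<longleftrightarrow> (\<exists>K. maximal_clique U E K \<and> K \<subseteq> X)" by simp
          qed
        next
          case ne: False
          show ?thesis
          proof (rule exI[of _ "w(v := t)"], rule exI[of _ t], intro allI impI)
            fix X assume X: "X \<subseteq> U"
            have finX: "finite X" using X psubset.hyps finite_subset by blast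
            have "sum (w(v:=t)) (X - {v}) = sum w (X - {v})" by (rule sum.cong) auto
            hence s: "sum (w(v:=t)) X = sum w (X - {v}) + (if v \<in> X then t else 0)"
              using sum_split_v[OF finX, of "w(v:=t)" v] by simp
            have XU': "X - {v} \<subseteq> U'" unfolding U'_def using X by blast
            have "(\<exists>K. maximal_clique U E K \<and> K \<subseteq> X) \<longleftrightarrow>
                  v \<in> X \<or> (\<exists>K. maximal_clique U' E K \<and> K \<subseteq> X - {v})"
            proof
              assume "\<exists>K. maximal_clique U E K \<and> K \<subseteq> X"
              then obtain K where K: "maximal_clique U E K" "K \<subseteq> X" by blast
              show "v \<in> X \<or> (\<exists>K. maximal_clique U' E K \<and> K \<subseteq> X - {v})"
              proof (cases "v \<in> K")
                case True thus ?thesis using K by blast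
              next
                case False
                thus ?thesis using iso_maxcl1[OF K(1) False] K(2) U'_def by blast
              qed
            next
              assume "v \<in> X \<or> (\<exists>K. maximal_clique U' E K \<and> K \<subseteq> X - {v})"
              thus "\<exists>K. maximal_clique U E K \<and> K \<subseteq> X"
              proof
                assume "v \<in> X"
                thus ?thesis using iso_maxcl2[OF v(1) iso] by blast
              next
                assume "\<exists>K. maximal_clique U' E K \<and> K \<subseteq> X - {v}"
                then obtain K where K: "maximal_clique (U - {v}) E K" "K \<subseteq> X - {v}" using U'_def by blast
                have "U - {v} \<noteq> {}" using ne U'_def by simp
                thus ?thesis using iso_maxcl3[OF v(1) iso _ K(1)] K(2) by blast
              qed
            qed
            moreover have "t \<le> sum w (X - {v}) \<longleftrightarrow> (\<exists>K. maximal_clique U' E K \<and> K \<subseteq> X - {v})"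
              using wt XU' by blast
            ultimately show "t \<le> sum (w(v:=t)) X \<longleftrightarrow> (\<exists>K. maximal_clique U E K \<and> K \<subseteq> X)"
              using s by (cases "v \<in> X") auto
          qed
        qed
      next
        assume dom: "\<forall>y\<in>U. y \<noteq> v \<longrightarrow> {v,y} \<in> E"
        define B where "B = sum w U' + 1"
        show ?thesis
        proof (rule exI[of _ "w(v := B)"], rule exI[of _ "t + B"], intro allI impI)
          fix X assume X: "X \<subseteq> U"
          have finX: "finite X" using X psubset.hyps finite_subset by blast
          have "sum (w(v:=B)) (X - {v}) = sum w (X - {v})" by (rule sum.cong) auto
          hence s: "sum (w(v:=B)) X = sum w (X - {v}) + (if v \<in> X then B else 0)"
            using sum_split_v[OF finX, of "w(v:=B)" v] by simp
          have XU': "X - {v} \<subseteq> U'" unfolding U'_def using X by blast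
          have "sum w (X - {v}) \<le> sum w U'" using sum_mono2[OF finU' XU', of w] by simp
          hence le: "sum w (X - {v}) < B" using B_def by simp
          have "(\<exists>K. maximal_clique U E K \<and> K \<subseteq> X) \<longleftrightarrow>
                  v \<in> X \<and> (\<exists>K. maximal_clique U' E K \<and> K \<subseteq> X - {v})"
          proof
            assume "\<exists>K. maximal_clique U E K \<and> K \<subseteq> X"
            then obtain K where K: "maximal_clique U E K" "K \<subseteq> X" by blast
            have "v \<in> K \<and> maximal_clique (U - {v}) E (K - {v})" by (rule dom_maxcl1[OF v(1) dom K(1)])
            thus "v \<in> X \<and> (\<exists>K. maximal_clique U' E K \<and> K \<subseteq> X - {v})" using K(2) U'_def by blast
          next
            assume h: "v \<in> X \<and> (\<exists>K. maximal_clique U' E K \<and> K \<subseteq> X - {v})"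
            then obtain K where K: "maximal_clique (U - {v}) E K" "K \<subseteq> X - {v}" using U'_def by blast
            have "maximal_clique U E (insert v K)" by (rule dom_maxcl2[OF v(1) dom K(1)])
            moreover have "insert v K \<subseteq> X" using h K(2) by blast
            ultimately show "\<exists>K. maximal_clique U E K \<and> K \<subseteq> X" by blast
          qed
          moreover have "t \<le> sum w (X - {v}) \<longleftrightarrow> (\<exists>K. maximal_clique U' E K \<and> K \<subseteq> X - {v})"
            using wt XU' by blast
          ultimately show "t + B \<le> sum (w(v:=B)) X \<longleftrightarrow> (\<exists>K. maximal_clique U E K \<and> K \<subseteq> X)"
            using s le by (cases "v \<in> X") auto
        qed
      qed
    qed
  qed
qed

lemma noncfg_thr_graph:
  assumes G: "simple_graph V E" and N: "\<not> cfg V E"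
  shows "threshold_graph V E"
  using noncfg_thr_graph_U[OF G N order_refl]
  unfolding threshold_graph_def threshold_hg_def by blast

lemma noncfg_thr_clique:
  assumes G: "simple_graph V E" and N: "\<not> cfg V E"
  shows "threshold_hg V (clique_edges V E)"
proof -
  have "\<And>X. dependent (clique_edges V E) X \<longleftrightarrow> (\<exists>K. maximal_clique V E K \<and> K \<subseteq> X)"
    unfolding dependent_def clique_edges_def by blast
  thus ?thesis using noncfg_thr_clique_U[OF G N order_refl]
    unfolding threshold_hg_def by simp
qed

theorem theorem20:
  fixes V :: "'a set" and E :: "'a set set"
  assumes "simple_graph V E"
  shows "(threshold_graph V E \<longleftrightarrow> one_sperner (clique_edges V E))
       \<and> (one_sperner (clique_edges V E) \<longleftrightarrow> threshold_hg V (clique_edges V E))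
       \<and> (threshold_hg V (clique_edges V E) \<longleftrightarrow> two_asummable V (clique_edges V E))"
proof -
  note G = assms
  have fin: "finite V" using G simple_graph_def by blast
  have a: "threshold_graph V E \<longleftrightarrow> \<not> cfg V E"
    using thr_noncfg[OF G] noncfg_thr_graph[OF G] by blast
  have b: "one_sperner (clique_edges V E) \<longleftrightarrow> \<not> cfg V E"
    using sperner_noncfg[OF G] noncfg_sperner[OF G] by blast
  have c: "threshold_hg V (clique_edges V E) \<Longrightarrow> two_asummable V (clique_edges V E)"
    using thr_asum[OF fin] by blast
  have d: "two_asummable V (clique_edges V E) \<Longrightarrow> one_sperner (clique_edges V E)"
    using asum_sperner[OF G] by blast
  have e: "\<not> cfg V E \<Longrightarrow> threshold_hg V (clique_edges V E)"
    using noncfg_thr_clique[OF G] by blast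
  show ?thesis using a b c d e by blast
qed

end
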